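(* Let $f:[0,1]^n\to[0,1]$ be implementable by a Bernoulli factory, and suppose that for some open face $F_{A,S,B}$ of the hypercube we have $f|_{F_{A,S,B}}\not\equiv 1$. Then there exist an integer $m\ge 0$ and a constant $c>0$ such that $1-f(p)\ge c\left((1-p)^A\, p^S(1-p)^S\, p^B\right)^m$ for all $p\in[0,1]^n$.
   Context: A (multiparameter) Bernoulli factory with input $(p_1,\dots,p_n)$ is a (possibly infinite) rooted binary tree in which every node has either $2$ children or $0$ children (leaf). Each internal node is labelled either by an index $i\in[n]$ or by a constant $c\in(0,1)$; each leaf is labelled $0$ or $1$. To execute it with coins $p\in[0,1]^n$, start at the root; at a node labelled $i$ draw a fresh independent Bernoulli($p_i$) sample, at a node labelled $c$ a fresh independent Bernoulli($c$) sample; move to the child corresponding to the outcome; upon reaching a leaf output its label. $f$ is implementable by a Bernoulli factory if there is such a tree which, for every $p\in[0,1]^n$, reaches a leaf almost surely and outputs $1$ with probability exactly $f(p)$. For a partition $[n]=A\sqcup S\sqcup B$, the open face is $F_{A,S,B}=\{p\in[0,1]^n: p_i=0\ (i\in A),\ 0<p_i<1\ (i\in S),\ p_i=1\ (i\in B)\}$. For $T\subseteq[n]$, $p^T=\prod_{i\in T}p_i$, $(1-p)^T=\prod_{i\in T}(1-p_i)$. $f|_X\equiv 1$ means $f$ equals $1$ on all of $X$. *)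

theory Defs
  imports "HOL-Analysis.Analysis"
begin

text \<open>Node labels of a Bernoulli factory tree over coin index type 'n.
  True = outcome 1 (go to the "1" child), False = outcome 0.\<close>
datatype 'n bf_label = Idx 'n | Cst real | Leaf bool

text \<open>A (possibly infinite) full binary tree is a labelling of all finite
  paths (bool lists from the root); the actual nodes are the paths all of whose
  proper prefixes are internal nodes.  Children of node xs are xs@[False], xs@[True].\<close>
type_synonym 'n bf_tree = "bool list \<Rightarrow> 'n bf_label"

definition is_internal :: "'n bf_label \<Rightarrow> bool" where
  "is_internal l \<longleftrightarrow> (case l of Leaf _ \<Rightarrow> False | _ \<Rightarrow> True)"

definition bf_node :: "'n bf_tree \<Rightarrow> bool list \<Rightarrow> bool" where
  "bf_node T xs \<longleftrightarrow> (\<forall>k<length xs. is_internal (T (take k xs)))"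

fun bf_edge :: "'n bf_label \<Rightarrow> ('n \<Rightarrow> real) \<Rightarrow> bool \<Rightarrow> real" where
  "bf_edge (Idx i) p b = (if b then p i else 1 - p i)"
| "bf_edge (Cst c) p b = (if b then c else 1 - c)"
| "bf_edge (Leaf _) p b = 0"

definition bf_reach :: "'n bf_tree \<Rightarrow> ('n \<Rightarrow> real) \<Rightarrow> bool list \<Rightarrow> real" where
  "bf_reach T p xs = (\<Prod>k<length xs. bf_edge (T (take k xs)) p (xs ! k))"

definition bf_wf :: "'n bf_tree \<Rightarrow> bool" where
  "bf_wf T \<longleftrightarrow> (\<forall>xs c. bf_node T xs \<and> T xs = Cst c \<longrightarrow> 0 < c \<and> c < 1)"

definition cube :: "('n \<Rightarrow> real) set" where
  "cube = {p. \<forall>i. 0 \<le> p i \<and> p i \<le> 1}"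

text \<open>T implements f: for every p in the cube, a leaf is reached almost surely
  (the leaf-reaching probabilities sum to 1) and output 1 occurs with probability f p.\<close>
definition bf_implements :: "'n bf_tree \<Rightarrow> (('n \<Rightarrow> real) \<Rightarrow> real) \<Rightarrow> bool" where
  "bf_implements T f \<longleftrightarrow> bf_wf T \<and>
     (\<forall>p\<in>cube.
        (bf_reach T p has_sum 1) {xs. bf_node T xs \<and> \<not> is_internal (T xs)} \<and>
        (bf_reach T p has_sum f p) {xs. bf_node T xs \<and> T xs = Leaf True})"

definition bf_implementable :: "(('n::finite \<Rightarrow> real) \<Rightarrow> real) \<Rightarrow> bool" where
  "bf_implementable f \<longleftrightarrow> (\<exists>T. bf_implements T f)"

definition open_face :: "'n set \<Rightarrow> 'n set \<Rightarrow> 'n set \<Rightarrow> ('n \<Rightarrow> real) set" where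
  "open_face A S B = {p. (\<forall>i\<in>A. p i = 0) \<and> (\<forall>i\<in>S. 0 < p i \<and> p i < 1) \<and> (\<forall>i\<in>B. p i = 1)}"

end

theory Submission
  imports Defs
begin

lemma bf_node_take:
  assumes "bf_node T xs" "k < length xs"
  shows "bf_node T (take k xs)" "is_internal (T (take k xs))"
  using assms unfolding bf_node_def by (auto simp: min_def)

lemma internal_cases:
  assumes "is_internal l"
  obtains i where "l = Idx i" | c where "l = Cst c"
  using assms unfolding is_internal_def by (cases l) auto

lemma cst_range:
  assumes "bf_wf T" "bf_node T xs" "k < length xs" "T (take k xs) = Cst c"
  shows "0 < c \<and> c < 1"
  using assms bf_node_take[OF assms(2,3)] unfolding bf_wf_def by blast

lemma reach_nonneg:
  assumes "bf_wf T" "p \<in> cube" "bf_node T ys"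
  shows "0 \<le> bf_reach T p ys"
  unfolding bf_reach_def
proof (rule prod_nonneg)
  fix k assume k: "k \<in> {..<length ys}"
  hence kl: "k < length ys" by simp
  from bf_node_take(2)[OF assms(3) kl] show "0 \<le> bf_edge (T (take k ys)) p (ys ! k)"
  proof (cases rule: internal_cases)
    case (1 i) thus ?thesis using assms(2) unfolding cube_def by auto
  next
    case (2 c) thus ?thesis using cst_range[OF assms(1,3) kl 2] by auto
  qed
qed

lemma prod_le_factor:
  fixes g :: "'a \<Rightarrow> real"
  assumes "finite I" "i \<in> I" "\<And>j. j \<in> I \<Longrightarrow> 0 \<le> g j \<and> g j \<le> 1"
  shows "prod g I \<le> g i"
proof -
  have "prod g I = g i * prod g (I - {i})" using assms by (simp add: prod.remove)
  moreover have "prod g (I - {i}) \<le> 1" by (rule prod_le_1) (use assms in auto)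
  moreover have "0 \<le> g i" using assms by auto
  ultimately show ?thesis by (simp add: mult_left_le)
qed

lemma prod_01:
  fixes g :: "'a \<Rightarrow> real"
  assumes "\<And>j. j \<in> I \<Longrightarrow> 0 \<le> g j \<and> g j \<le> 1"
  shows "0 \<le> prod g I \<and> prod g I \<le> 1"
  using assms by (auto intro: prod_nonneg prod_le_1)

theorem lemma3:
  fixes f :: "('n::finite \<Rightarrow> real) \<Rightarrow> real" and A S B :: "'n set"
  assumes "bf_implementable f"
    and "A \<inter> S = {}" and "A \<inter> B = {}" and "S \<inter> B = {}" and "A \<union> S \<union> B = UNIV"
    and "\<exists>p\<in>open_face A S B. f p \<noteq> 1"
  shows "\<exists>(m::nat) (c::real). c > 0 \<and> (\<forall>p\<in>cube.
           1 - f p \<ge> c * ((\<Prod>i\<in>A. 1 - p i) * (\<Prod>i\<in>S. p i) * (\<Prod>i\<in>S. 1 - p i)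
                           * (\<Prod>i\<in>B. p i)) ^ m)"
proof -
  obtain T where T: "bf_implements T f" using assms(1) unfolding bf_implementable_def by blast
  have wf: "bf_wf T" using T unfolding bf_implements_def by blast
  define L where "L = {xs. bf_node T xs \<and> \<not> is_internal (T xs)}"
  define L1 where "L1 = {xs. bf_node T xs \<and> T xs = Leaf True}"
  define L0 where "L0 = {xs. bf_node T xs \<and> T xs = Leaf False}"
  have L0eq: "L0 = L - L1"
  proof (rule set_eqI)
    fix x show "x \<in> L0 \<longleftrightarrow> x \<in> L - L1"
      unfolding L0_def L_def L1_def is_internal_def by (cases "T x") auto
  qed
  have sum0: "(bf_reach T p has_sum (1 - f p)) L0" if "p \<in> cube" for p
  proof -
    have "(bf_reach T p has_sum 1) L" "(bf_reach T p has_sum f p) L1"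
      using T that unfolding bf_implements_def L_def L1_def by auto
    moreover have "L1 \<subseteq> L" unfolding L_def L1_def is_internal_def by auto
    ultimately show ?thesis unfolding L0eq by (rule has_sum_Diff)
  qed
  have bound: "bf_reach T p xs \<le> 1 - f p" if "p \<in> cube" "xs \<in> L0" for p xs
  proof (rule has_sum_mono_neutral[OF _ sum0[OF that(1)]])
    show "(bf_reach T p has_sum bf_reach T p xs) {xs}" by (rule has_sum_finiteI) auto
  qed (use that reach_nonneg[OF wf that(1)] in \<open>auto simp: L0_def\<close>)
  obtain p0 where p0: "p0 \<in> open_face A S B" "f p0 \<noteq> 1" using assms(6) by blast
  have p0c: "p0 \<in> cube" unfolding cube_def
  proof (intro CollectI allI)
    fix i
    have "i \<in> A \<or> i \<in> S \<or> i \<in> B" using assms(5) by auto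
    thus "0 \<le> p0 i \<and> p0 i \<le> 1" using p0(1) unfolding open_face_def by force
  qed
  have "\<exists>xs\<in>L0. bf_reach T p0 xs \<noteq> 0"
  proof (rule ccontr)
    assume "\<not> ?thesis"
    hence "(bf_reach T p0 has_sum 0) L0" by (intro has_sum_0) auto
    with sum0[OF p0c] p0(2) show False using has_sum_unique by fastforce
  qed
  then obtain xs where xs: "xs \<in> L0" "bf_reach T p0 xs \<noteq> 0" by blast
  have xsn: "bf_node T xs" using xs(1) unfolding L0_def by auto
  define n where "n = length xs"
  define e where "e = (\<lambda>p k. bf_edge (T (take k xs)) p (xs ! k))"
  define d where "d = (\<lambda>k. case T (take k xs) of Cst c \<Rightarrow> e p0 k | _ \<Rightarrow> 1)"
  define Q where "Q = (\<lambda>p::'n \<Rightarrow> real. (\<Prod>i\<in>A. 1 - p i) * (\<Prod>i\<in>S. p i) * (\<Prod>i\<in>S. 1 - p i)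
                           * (\<Prod>i\<in>B. p i))"
  have e0: "e p0 k \<noteq> 0" if "k < n" for k
    using xs(2) that unfolding bf_reach_def e_def n_def by auto
  have Qprops: "0 \<le> Q p \<and> Q p \<le> 1 \<and> (\<forall>i\<in>S \<union> B. Q p \<le> p i) \<and> (\<forall>i\<in>A \<union> S. Q p \<le> 1 - p i)"
    if p: "p \<in> cube" for p
  proof -
    have r: "0 \<le> p i" "p i \<le> 1" for i using p unfolding cube_def by auto
    define a where "a = (\<Prod>i\<in>A. 1 - p i)"
    define b where "b = (\<Prod>i\<in>S. p i)"
    define c where "c = (\<Prod>i\<in>S. 1 - p i)"
    define dd where "dd = (\<Prod>i\<in>B. p i)"
    have a: "0 \<le> a \<and> a \<le> 1" unfolding a_def by (rule prod_01) (use r in auto)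
    have b: "0 \<le> b \<and> b \<le> 1" unfolding b_def by (rule prod_01) (use r in auto)
    have c: "0 \<le> c \<and> c \<le> 1" unfolding c_def by (rule prod_01) (use r in auto)
    have dd: "0 \<le> dd \<and> dd \<le> 1" unfolding dd_def by (rule prod_01) (use r in auto)
    have Qe: "Q p = a * b * c * dd" unfolding Q_def a_def b_def c_def dd_def by simp
    have 0: "0 \<le> Q p" unfolding Qe using a b c dd by simp
    have la: "Q p \<le> a" unfolding Qe using a b c dd
      by (metis mult_le_one mult_left_le mult.assoc mult_nonneg_nonneg)
    have lb: "Q p \<le> b" unfolding Qe using a b c dd
      by (metis mult_le_one mult_left_le mult.assoc mult.commute mult_nonneg_nonneg)
    have lc: "Q p \<le> c" unfolding Qe using a b c dd
      by (metis mult_le_one mult_left_le mult.assoc mult.commute mult_nonneg_nonneg)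
    have ld: "Q p \<le> dd" unfolding Qe using a b c dd
      by (metis mult_le_one mult_left_le mult.assoc mult.commute mult_nonneg_nonneg)
    have "Q p \<le> 1" using ld dd by linarith
    moreover have "\<forall>i\<in>S \<union> B. Q p \<le> p i"
    proof
      fix i assume "i \<in> S \<union> B"
      thus "Q p \<le> p i"
      proof
        assume "i \<in> S" hence "b \<le> p i" unfolding b_def by (intro prod_le_factor) (use r in auto)
        thus ?thesis using lb by linarith
      next
        assume "i \<in> B" hence "dd \<le> p i" unfolding dd_def by (intro prod_le_factor) (use r in auto)
        thus ?thesis using ld by linarith
      qed
    qed
    moreover have "\<forall>i\<in>A \<union> S. Q p \<le> 1 - p i"
    proof
      fix i assume "i \<in> A \<union> S"
      thus "Q p \<le> 1 - p i"
      proof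
        assume "i \<in> A" hence "a \<le> 1 - p i" unfolding a_def by (intro prod_le_factor) (use r in auto)
        thus ?thesis using la by linarith
      next
        assume "i \<in> S" hence "c \<le> 1 - p i" unfolding c_def by (intro prod_le_factor) (use r in auto)
        thus ?thesis using lc by linarith
      qed
    qed
    ultimately show ?thesis using 0 by blast
  qed
  have dpos: "0 < d k \<and> (\<forall>p\<in>cube. 0 \<le> d k * Q p \<and> d k * Q p \<le> e p k)" if k: "k < n" for k
  proof -
    have kl: "k < length xs" using k n_def by simp
    from bf_node_take(2)[OF xsn kl] show ?thesis
    proof (cases rule: internal_cases)
      case (1 i)
      have dk: "d k = 1" unfolding d_def 1 by simp
      have ne: "bf_edge (Idx i) p0 (xs ! k) \<noteq> 0" using e0[OF k] unfolding e_def 1 .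
      have iu: "i \<in> A \<or> i \<in> S \<or> i \<in> B" using assms(5) by auto
      show ?thesis
      proof (cases "xs ! k")
        case True
        have "p0 i \<noteq> 0" using ne True by simp
        hence "i \<in> S \<union> B" using iu p0(1) unfolding open_face_def by auto
        hence "\<forall>p\<in>cube. Q p \<le> p i" using Qprops by blast
        moreover have "\<forall>p\<in>cube. e p k = p i" unfolding e_def 1 using True by simp
        ultimately show ?thesis unfolding dk using Qprops by auto
      next
        case False
        have "p0 i \<noteq> 1" using ne False by simp
        hence "i \<in> A \<union> S" using iu p0(1) unfolding open_face_def by auto
        hence "\<forall>p\<in>cube. Q p \<le> 1 - p i" using Qprops by blast
        moreover have "\<forall>p\<in>cube. e p k = 1 - p i" unfolding e_def 1 using False by simp
        ultimately show ?thesis unfolding dk using Qprops by auto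
      qed
    next
      case (2 c)
      have c: "0 < c" "c < 1" using cst_range[OF wf xsn kl 2] by auto
      have dk: "d k = (if xs ! k then c else 1 - c)" unfolding d_def e_def 2 by simp
      have ek: "e p k = d k" for p unfolding dk e_def 2 by simp
      have dp: "0 < d k" unfolding dk using c by auto
      show ?thesis unfolding ek
      proof (intro conjI ballI)
        fix p :: "'n \<Rightarrow> real" assume "p \<in> cube"
        hence q: "0 \<le> Q p" "Q p \<le> 1" using Qprops by auto
        show "0 \<le> d k * Q p" using dp q by simp
        show "d k * Q p \<le> d k" using dp q by (simp add: mult_left_le)
      qed (rule dp)
    qed
  qed
  define C where "C = (\<Prod>k<n. d k)"
  have Cpos: "0 < C" unfolding C_def using dpos by (intro prod_pos) auto
  show ?thesis
  proof (intro exI conjI ballI)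
    show "0 < C" by (rule Cpos)
    fix p :: "'n \<Rightarrow> real" assume p: "p \<in> cube"
    have "C * Q p ^ n = (\<Prod>k<n. d k * Q p)" unfolding C_def by (simp add: prod.distrib)
    also have "\<dots> \<le> (\<Prod>k<n. e p k)"
      by (rule prod_mono) (use dpos p in auto)
    also have "\<dots> = bf_reach T p xs" unfolding bf_reach_def e_def n_def by simp
    also have "\<dots> \<le> 1 - f p" using bound[OF p xs(1)] .
    finally have fin: "C * Q p ^ n \<le> 1 - f p" .
    show "1 - f p \<ge> C * ((\<Prod>i\<in>A. 1 - p i) * (\<Prod>i\<in>S. p i) * (\<Prod>i\<in>S. 1 - p i)
                           * (\<Prod>i\<in>B. p i)) ^ n" using fin unfolding Q_def .
  qed
qed

end
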